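(* Let $r\geq 1$, let $\mathbf a=(a_1,\ldots,a_r)$ be positive integers, let $D$ be a positive common multiple of $a_1,\ldots,a_r$, and let $\sigma=a_1+\cdots+a_r$. Then for every integer $n\geq 0$, $$ (r-1)!\,p_{\mathbf a}(n) = \sum_{j= \lceil \frac{n+\sigma}{D} \rceil - r}^{\lfloor n/D\rfloor} (j+1)(j+2)\cdots (j+r-1)\, f_{\mathbf a}(n-jD). $$
   Context: $p_{\mathbf a}(n)$ is the number of integer solutions $(x_1,\ldots,x_r)$ of $a_1x_1+\cdots+a_rx_r=n$ with all $x_i\geq 0$. For every integer $m\geq 0$, $f_{\mathbf a}(m)$ denotes the number of integer tuples $(j_1,\ldots,j_r)$ with $a_1j_1+\cdots+a_rj_r=m$ and $0\leq j_k\leq \frac{D}{a_k}-1$ for $1\leq k\leq r$ (so $f_{\mathbf a}(m)=0$ for $m> rD-\sigma$). *)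

theory Defs
  imports Complex_Main
begin

text \<open>The vector a = (a_1,...,a_r) is a list of length r; tuples are lists of
the same length.\<close>

definition p_a :: "nat list \<Rightarrow> nat \<Rightarrow> nat" where
  "p_a a n = card {x :: nat list. length x = length a \<and>
                    (\<Sum>k<length a. a ! k * x ! k) = n}"

definition f_a :: "nat list \<Rightarrow> nat \<Rightarrow> nat \<Rightarrow> nat" where
  "f_a a D m = card {j :: nat list. length j = length a \<and>
                    (\<Sum>k<length a. a ! k * j ! k) = m \<and>
                    (\<forall>k<length a. int (j ! k) \<le> int (D div (a ! k)) - 1)}"

end

theory Submission imports Defs begin
lemma prodfact: "fact m * ((Q+m) choose m) = (\<Prod>i=1..m. Q+i::nat)"
proof (induction m)
  case 0 then show ?case by simp
next
  case (Suc m)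
  have "fact (Suc m) * ((Q + Suc m) choose Suc m) = fact m * (Suc m * (Suc (Q+m) choose Suc m))"
    by (simp add: algebra_simps)
  also have "\<dots> = fact m * ((Q+m) choose m) * (Q + Suc m)"
    by (subst Suc_times_binomial) (simp add: algebra_simps)
  also have "\<dots> = (\<Prod>i=1..Suc m. Q+i)" using Suc by (simp add: prod.nat_ivl_Suc')
  finally show ?case .
qed

lemma f_zero:
  assumes "\<forall>k<length a. a ! k > 0" "\<forall>k<length a. a ! k dvd D"
    and "m + sum_list a > length a * D"
  shows "f_a a D m = 0"
proof -
  have "False" if j: "length j = length a" "(\<Sum>k<length a. a ! k * j ! k) = m"
      "\<forall>k<length a. int (j ! k) \<le> int (D div (a ! k)) - 1" for j
  proof -
    have "a!k * j!k + a!k \<le> D" if k: "k < length a" for k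
    proof -
      have "j!k + 1 \<le> D div a!k" using j(3) k by force
      hence "a!k * (j!k + 1) \<le> a!k * (D div a!k)" by (rule mult_le_mono2)
      also have "\<dots> = D" using assms(2) k by simp
      finally show ?thesis by (simp add: algebra_simps)
    qed
    hence "(\<Sum>k<length a. a!k * j!k + a!k) \<le> (\<Sum>k<length a. D)" by (intro sum_mono) auto
    moreover have "sum_list a = (\<Sum>k<length a. a!k)"
      by (simp add: sum_list_sum_nth atLeast0LessThan)
    ultimately show False using j(2) assms(3) by (simp add: sum.distrib)
  qed
  hence "{j :: nat list. length j = length a \<and>
                    (\<Sum>k<length a. a ! k * j ! k) = m \<and>
                    (\<forall>k<length a. int (j ! k) \<le> int (D div (a ! k)) - 1)} = {}" by blast
  thus ?thesis unfolding f_a_def by (metis card.empty)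
qed
lemma count_main:
  assumes pos: "\<forall>k<length a. a ! k > 0" and D: "D > 0" and dv: "\<forall>k<length a. a ! k dvd D"
  shows "p_a a n = (\<Sum>Q=0..n div D. ((Q + length a - 1) choose Q) * f_a a D (n - Q*D))"
proof -
  define r where "r = length a"
  define c where "c = (\<lambda>k. D div a!k)"
  have ac: "a!k * c k = D" if "k < r" for k using dv that unfolding c_def r_def by simp
  have cpos: "c k > 0" if "k < r" for k using ac[OF that] D by (cases "c k") auto
  define S where "S = {x::nat list. length x = r \<and> (\<Sum>k<r. a!k * x!k) = n}"
  define J where "J = (\<lambda>m. {j::nat list. length j = r \<and> (\<Sum>k<r. a!k*j!k) = m \<and> (\<forall>k<r. int(j!k) \<le> int(D div a!k) - 1)})"
  define Qs where "Qs = (\<lambda>Q. {q::nat list. length q = r \<and> sum_list q = Q})"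
  define T where "T = Sigma {0..n div D} (\<lambda>Q. J (n - Q*D) \<times> Qs Q)"
  define psi where "psi = (\<lambda>x::nat list. ((\<Sum>k<r. x!k div c k), map (\<lambda>k. x!k mod c k) [0..<r], map (\<lambda>k. x!k div c k) [0..<r]))"
  define phi where "phi = (\<lambda>(Q::nat,j::nat list,q::nat list). map (\<lambda>k. j!k + c k * q!k) [0..<r])"
  have Jlt: "j!k < c k" if "j \<in> J m" "k < r" for j m k
    using that unfolding J_def c_def by force
  have ident: "(\<Sum>k<r. a!k * (j k + c k * q k)) = (\<Sum>k<r. a!k * j k) + D * (\<Sum>k<r. q k)" for j q
  proof -
    have "(\<Sum>k<r. a!k * (j k + c k * q k)) = (\<Sum>k<r. a!k * j k + D * q k)"
    proof (intro sum.cong refl)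
      fix k assume "k \<in> {..<r}"
      hence "a!k * c k = D" using ac by simp
      moreover have "a!k * (j k + c k * q k) = a!k * j k + (a!k * c k) * q k"
        by (simp add: algebra_simps)
      ultimately show "a!k * (j k + c k * q k) = a!k * j k + D * q k" by simp
    qed
    also have "\<dots> = (\<Sum>k<r. a!k * j k) + D * (\<Sum>k<r. q k)"
      by (simp add: sum.distrib sum_distrib_left)
    finally show ?thesis .
  qed
  have sl: "sum_list q = (\<Sum>k<r. q!k)" if "length q = r" for q :: "nat list"
    using that by (simp add: sum_list_sum_nth atLeast0LessThan)
  have bij: "bij_betw psi S T"
  proof (rule bij_betw_byWitness[where f'=phi])
    show "\<forall>x\<in>S. phi (psi x) = x"
      by (auto simp: S_def phi_def psi_def intro!: nth_equalityI simp: mod_mult_div_eq)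
    show "\<forall>t\<in>T. psi (phi t) = t"
    proof
      fix t assume "t \<in> T"
      then obtain Q j q where t: "t = (Q,j,q)" "j \<in> J (n - Q*D)" "q \<in> Qs Q"
        unfolding T_def by auto
      have lj: "length j = r" and lq: "length q = r" "sum_list q = Q"
        using t unfolding J_def Qs_def by auto
      have dm: "(j!k + c k * q!k) div c k = q!k" "(j!k + c k * q!k) mod c k = j!k" if "k < r" for k
        using Jlt[OF t(2) that] cpos[OF that] by auto
      show "psi (phi t) = t"
        using dm lj lq sl[OF lq(1)] by (auto simp: t psi_def phi_def intro!: nth_equalityI)
    qed
    show "psi ` S \<subseteq> T"
    proof
      fix y assume "y \<in> psi ` S"
      then obtain x where x: "x \<in> S" "y = psi x" by auto
      define Q where "Q = (\<Sum>k<r. x!k div c k)"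
      define j where "j = map (\<lambda>k. x!k mod c k) [0..<r]"
      define q where "q = map (\<lambda>k. x!k div c k) [0..<r]"
      have xs: "length x = r" "(\<Sum>k<r. a!k * x!k) = n" using x unfolding S_def by auto
      have "(\<Sum>k<r. a!k * x!k) = (\<Sum>k<r. a!k * (x!k mod c k + c k * (x!k div c k)))"
        by (simp add: mod_mult_div_eq)
      also have "\<dots> = (\<Sum>k<r. a!k * (x!k mod c k)) + D * Q" unfolding Q_def by (rule ident)
      finally have eq: "n = (\<Sum>k<r. a!k * (x!k mod c k)) + D * Q" using xs by simp
      have "Q \<le> n div D" using D eq by (simp add: less_eq_div_iff_mult_less_eq mult.commute)
      moreover have "j \<in> J (n - Q*D)"
      proof -
        have "int (x!k mod c k) \<le> int (D div a!k) - 1" if "k < r" for k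
          using mod_less_divisor[OF cpos[OF that], of "x!k"] unfolding c_def by linarith
        moreover have "(\<Sum>k<r. a!k * j!k) = (\<Sum>k<r. a!k * (x!k mod c k))"
          unfolding j_def by (intro sum.cong refl) simp
        ultimately show ?thesis unfolding J_def using eq by (simp add: j_def mult.commute)
      qed
      moreover have "q \<in> Qs Q" unfolding Qs_def q_def Q_def
        by (simp add: sum_list_sum_nth atLeast0LessThan)
      ultimately show "y \<in> T" using x unfolding T_def psi_def Q_def j_def q_def by auto
    qed
    show "phi ` T \<subseteq> S"
    proof
      fix y assume "y \<in> phi ` T"
      then obtain Q j q where t: "y = phi (Q,j,q)" "j \<in> J (n - Q*D)" "q \<in> Qs Q" "Q \<le> n div D"
        unfolding T_def by auto
      have lj: "length j = r" "(\<Sum>k<r. a!k*j!k) = n - Q*D" and lq: "length q = r" "sum_list q = Q"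
        using t unfolding J_def Qs_def by auto
      have "Q * D \<le> n" using t(4) D by (simp add: less_eq_div_iff_mult_less_eq)
      then show "y \<in> S" unfolding S_def t phi_def
        using ident[of "\<lambda>k. j!k" "\<lambda>k. q!k"] lj lq sl[OF lq(1)] by (simp add: mult.commute)
    qed
  qed
  have finJ: "finite (J m)" for m
  proof (rule finite_subset)
    show "J m \<subseteq> {xs. set xs \<subseteq> {..<D} \<and> length xs = r}"
    proof
      fix j assume j: "j \<in> J m"
      have "j!k < D" if "k < r" for k
      proof -
        have "a!k \<ge> 1" using pos that unfolding r_def by (simp add: Suc_leI)
        hence "1 * c k \<le> a!k * c k" by (rule mult_le_mono1)
        thus ?thesis using Jlt[OF j that] ac[OF that] by simp
      qed
      thus "j \<in> {xs. set xs \<subseteq> {..<D} \<and> length xs = r}" using j unfolding J_def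
        by (auto simp: in_set_conv_nth)
    qed
  qed (rule finite_lists_length_eq, simp)
  have cQ: "card (Qs Q) = (Q + r - 1) choose Q" for Q
    unfolding Qs_def by (rule card_length_sum_list)
  have finQ: "finite (Qs Q)" for Q
  proof (rule finite_subset)
    show "Qs Q \<subseteq> {xs. set xs \<subseteq> {..Q} \<and> length xs = r}"
      unfolding Qs_def using member_le_sum_list by fastforce
  qed (rule finite_lists_length_eq, simp)
  have "p_a a n = card S" unfolding p_a_def S_def r_def by simp
  also have "\<dots> = card T" using bij by (rule bij_betw_same_card)
  also have "\<dots> = (\<Sum>Q=0..n div D. card (J (n - Q*D) \<times> Qs Q))"
    unfolding T_def by (rule card_SigmaI) (auto intro: finJ finQ)
  also have "\<dots> = (\<Sum>Q=0..n div D. ((Q + length a - 1) choose Q) * f_a a D (n - Q*D))"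
    by (intro sum.cong refl) (simp add: card_cartesian_product cQ f_a_def J_def r_def)
  finally show ?thesis .
qed
theorem corollary2p3:
  fixes a :: "nat list" and D n :: nat
  assumes "length a \<ge> 1"
    and "\<forall>k<length a. a ! k > 0"
    and "D > 0"
    and "\<forall>k<length a. a ! k dvd D"
  shows "int (fact (length a - 1) * p_a a n) =
    (\<Sum>j\<in>{ \<lceil>(of_nat n + of_nat (sum_list a)) / (of_nat D :: real)\<rceil> - int (length a)
           .. int n div int D }.
       (\<Prod>i=1..length a - 1. j + int i) * int (f_a a D (nat (int n - j * int D))))"
proof -
  define r where "r = length a"
  define L where "L = \<lceil>(of_nat n + of_nat (sum_list a)) / (of_nat D :: real)\<rceil> - int (length a)"
  define U where "U = int n div int D"
  define g where "g = (\<lambda>j. (\<Prod>i=1..length a - 1. j + int i) * int (f_a a D (nat (int n - j * int D))))"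
  have r1: "r \<ge> 1" using assms(1) r_def by simp
  have sig: "sum_list a > 0"
  proof -
    have "a!0 \<in> set a" using assms(1) by (intro nth_mem) linarith
    hence "a!0 \<le> sum_list a" by (simp add: member_le_sum_list)
    moreover have "a!0 > 0" using assms(1,2) by (metis One_nat_def Suc_le_lessD)
    ultimately show ?thesis by simp
  qed
  have L1: "L \<ge> 1 - int r"
  proof -
    have "(of_nat n + of_nat (sum_list a)) / (of_nat D :: real) > 0" using sig assms(3) by simp
    hence "1 \<le> \<lceil>(of_nat n + of_nat (sum_list a)) / (of_nat D :: real)\<rceil>" by simp
    thus ?thesis unfolding L_def r_def by simp
  qed
  have g0neg: "g j = 0" if "j \<in> {L..U} - {0..U}" for j
  proof -
    have j: "j < 0" "j \<ge> 1 - int r" using that L1 by auto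
    have "nat (-j) \<in> {1..length a - 1}" using j r_def by auto
    moreover have "j + int (nat (-j)) = 0" using j by simp
    ultimately have "(\<Prod>i=1..length a - 1. j + int i) = 0"
      by (meson prod_zero finite_atLeastAtMost)
    thus ?thesis unfolding g_def by simp
  qed
  have g0small: "g j = 0" if "j \<in> {0..U} - {L..U}" for j
  proof -
    have j: "0 \<le> j" "j < L" "j \<le> U" using that by auto
    have jD: "j * int D \<le> int n"
    proof -
      have "j * int D \<le> (int n div int D) * int D"
        using j(3) unfolding U_def by (intro mult_right_mono) auto
      moreover have "(int n div int D) * int D = int n - int n mod int D"
        by (simp add: minus_mod_eq_div_mult)
      moreover have "int n mod int D \<ge> 0" using assms(3) by simp
      ultimately show ?thesis by linarith
    qed
    have "j + int r < \<lceil>(of_nat n + of_nat (sum_list a)) / (of_nat D :: real)\<rceil>"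
      using j(2) unfolding L_def r_def by simp
    hence "real_of_int (j + int r) < (of_nat n + of_nat (sum_list a)) / (of_nat D :: real)"
      by (simp only: less_ceiling_iff)
    hence "real_of_int (j + int r) * real D < real n + real (sum_list a)"
      using assms(3) by (simp add: pos_less_divide_eq)
    hence "real_of_int ((j + int r) * int D) < real_of_int (int n + int (sum_list a))" by simp
    hence lt: "(j + int r) * int D < int n + int (sum_list a)" by (simp only: of_int_less_iff)
    have "int (nat (int n - j*int D)) = int n - j * int D" using jD by simp
    hence "int (length a * D) < int (nat (int n - j*int D) + sum_list a)"
      using lt unfolding r_def by (simp add: algebra_simps)
    hence "length a * D < nat (int n - j*int D) + sum_list a" by (simp only: of_nat_less_iff)
    hence "f_a a D (nat (int n - j * int D)) = 0" using assms(2,4) by (intro f_zero) auto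
    thus ?thesis unfolding g_def by simp
  qed
  have "(\<Sum>j\<in>{L..U}. g j) = (\<Sum>j\<in>{L..U} \<union> {0..U}. g j)"
    by (rule sum.mono_neutral_right[symmetric]) (auto intro: g0small)
  also have "\<dots> = (\<Sum>j\<in>{0..U}. g j)"
    by (rule sum.mono_neutral_right) (auto intro: g0neg)
  also have "{0..U} = int ` {0..n div D}" unfolding U_def by (simp add: image_int_atLeastAtMost zdiv_int)
  also have "(\<Sum>j\<in>int ` {0..n div D}. g j) = (\<Sum>Q\<in>{0..n div D}. g (int Q))"
    by (simp add: sum.reindex)
  also have "\<dots> = (\<Sum>Q\<in>{0..n div D}. int ((\<Prod>i=1..r-1. Q+i) * f_a a D (n - Q*D)))"
  proof (intro sum.cong refl)
    fix Q assume "Q \<in> {0..n div D}"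
    hence "Q * D \<le> n" using assms(3) by (simp add: less_eq_div_iff_mult_less_eq)
    hence "nat (int n - int Q * int D) = n - Q*D" by (simp add: of_nat_mult[symmetric] del: of_nat_mult)
    thus "g (int Q) = int ((\<Prod>i=1..r-1. Q+i) * f_a a D (n - Q*D))"
      unfolding g_def r_def by simp
  qed
  also have "\<dots> = int (fact (r-1) * p_a a n)"
  proof -
    have "fact (r-1) * p_a a n = (\<Sum>Q=0..n div D. fact (r-1) * ((Q + r - 1) choose Q) * f_a a D (n - Q*D))"
      unfolding count_main[OF assms(2,3,4)] r_def by (simp add: sum_distrib_left mult.assoc)
    also have "\<dots> = (\<Sum>Q=0..n div D. (\<Prod>i=1..r-1. Q+i) * f_a a D (n - Q*D))"
    proof (intro sum.cong refl)
      fix Q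
      have "(Q + r - 1) choose Q = (Q + (r-1)) choose (r-1)"
        using r1 binomial_symmetric[of Q "Q + (r-1)"] by simp
      thus "fact (r-1) * ((Q + r - 1) choose Q) * f_a a D (n - Q*D) = (\<Prod>i=1..r-1. Q+i) * f_a a D (n - Q*D)"
        by (simp add: prodfact)
    qed
    finally show ?thesis by simp
  qed
  finally show ?thesis unfolding L_def U_def g_def r_def by simp
qed
end
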